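(* Let $p$ be a prime and $G$ a group of order $mp$ with $p\nmid m$, having a unique Sylow $p$-subgroup $P$. Suppose $G$ has a subgroup $M$ of order $m$ such that $p\nmid|\mathrm{Aut}(M)|$. Let $N$ be a regular subgroup of $\mathrm{Hol}(G)$ and, for $g\in G$, let $\nu(g)$ be the unique element of $N$ with $1^{\nu(g)}=g$; write $\nu(P)=\{\nu(x):x\in P\}$. Then: (1) $\nu(P)$ is a subgroup of $N$, hence a Sylow $p$-subgroup of $N$; (2) $\nu(P)\in\{\rho(P),\lambda(P)\}$; (3) $[\rho(G),\nu(P)]\le\nu(P)$.
   Context: Permutations act on the right, written exponentially. $S(G)$ is the permutation group of the set $G$; $\rho(g):x\mapsto xg$ and $\lambda(g):x\mapsto gx$; $\mathrm{Hol}(G)=N_{S(G)}(\rho(G))=\mathrm{Aut}(G)\rho(G)$, which also contains $\lambda(G)$. A subgroup of $S(G)$ is regular if it acts transitively with trivial point stabilisers. Commutators in $S(G)$: $[x,y]=x^{-1}y^{-1}xy$. *)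

theory Defs
  imports "HOL-Algebra.Algebra"
begin

text \<open>Symmetric group S(U) with permutations acting on the right:
  the product s * t means first s, then t, i.e. the function t o s.\<close>
definition SymR :: "'a set \<Rightarrow> ('a \<Rightarrow> 'a) monoid" where
  "SymR U = \<lparr>carrier = Bij U, Group.monoid.mult = (\<lambda>s t. compose U t s), Group.monoid.one = (\<lambda>x\<in>U. x)\<rparr>"

definition rho :: "('a, 'b) monoid_scheme \<Rightarrow> 'a \<Rightarrow> ('a \<Rightarrow> 'a)" where
  "rho G g = (\<lambda>x\<in>carrier G. x \<otimes>\<^bsub>G\<^esub> g)"

definition lam :: "('a, 'b) monoid_scheme \<Rightarrow> 'a \<Rightarrow> ('a \<Rightarrow> 'a)" where
  "lam G g = (\<lambda>x\<in>carrier G. g \<otimes>\<^bsub>G\<^esub> x)"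

text \<open>Hol(G) = normaliser of rho(G) in S(G).\<close>
definition Hol :: "('a, 'b) monoid_scheme \<Rightarrow> ('a \<Rightarrow> 'a) set" where
  "Hol G = {s \<in> carrier (SymR (carrier G)).
     (\<lambda>r. inv\<^bsub>SymR (carrier G)\<^esub> s \<otimes>\<^bsub>SymR (carrier G)\<^esub> r \<otimes>\<^bsub>SymR (carrier G)\<^esub> s) ` (rho G ` carrier G)
       = rho G ` carrier G}"

definition regular_subgroup :: "'a set \<Rightarrow> ('a \<Rightarrow> 'a) set \<Rightarrow> bool" where
  "regular_subgroup U N \<longleftrightarrow> subgroup N (SymR U)
     \<and> (\<forall>x\<in>U. \<forall>y\<in>U. \<exists>s\<in>N. s x = y)
     \<and> (\<forall>x\<in>U. \<forall>s\<in>N. s x = x \<longrightarrow> s = \<one>\<^bsub>SymR U\<^esub>)"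

definition nu :: "('a, 'b) monoid_scheme \<Rightarrow> ('a \<Rightarrow> 'a) set \<Rightarrow> 'a \<Rightarrow> ('a \<Rightarrow> 'a)" where
  "nu G N g = (THE s. s \<in> N \<and> s \<one>\<^bsub>G\<^esub> = g)"

definition commR :: "('a, 'b) monoid_scheme \<Rightarrow> 'a \<Rightarrow> 'a \<Rightarrow> 'a" where
  "commR H x y = inv\<^bsub>H\<^esub> x \<otimes>\<^bsub>H\<^esub> inv\<^bsub>H\<^esub> y \<otimes>\<^bsub>H\<^esub> x \<otimes>\<^bsub>H\<^esub> y"

definition comm_subgroup :: "('a, 'b) monoid_scheme \<Rightarrow> 'a set \<Rightarrow> 'a set \<Rightarrow> 'a set" where
  "comm_subgroup H A B = generate H {commR H a b | a b. a \<in> A \<and> b \<in> B}"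

definition sylow_subgroup :: "nat \<Rightarrow> 'a set \<Rightarrow> ('a, 'b) monoid_scheme \<Rightarrow> bool" where
  "sylow_subgroup p H G \<longleftrightarrow> subgroup H G \<and> (\<exists>k. card H = p ^ k)
     \<and> \<not> p dvd (order G div card H)"

end

theory Submission
  imports Defs "HOL-Number_Theory.Residues"
begin

lemma SymR_group: "group (SymR U)"
proof (rule groupI)
  fix x y assume "x \<in> carrier (SymR U)" "y \<in> carrier (SymR U)"
  thus "x \<otimes>\<^bsub>SymR U\<^esub> y \<in> carrier (SymR U)" by (simp add: SymR_def compose_Bij)
next
  show "\<one>\<^bsub>SymR U\<^esub> \<in> carrier (SymR U)" by (simp add: SymR_def id_Bij)
next
  fix x y z assume "x \<in> carrier (SymR U)" "y \<in> carrier (SymR U)" "z \<in> carrier (SymR U)"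
  thus "x \<otimes>\<^bsub>SymR U\<^esub> y \<otimes>\<^bsub>SymR U\<^esub> z = x \<otimes>\<^bsub>SymR U\<^esub> (y \<otimes>\<^bsub>SymR U\<^esub> z)"
    by (simp add: SymR_def compose_assoc Bij_imp_funcset)
next
  fix x assume "x \<in> carrier (SymR U)"
  thus "\<one>\<^bsub>SymR U\<^esub> \<otimes>\<^bsub>SymR U\<^esub> x = x"
    by (simp add: SymR_def) (metis compose_Id Bij_imp_funcset Bij_imp_extensional)
next
  fix x assume x: "x \<in> carrier (SymR U)"
  hence xb: "x \<in> Bij U" by (simp add: SymR_def)
  hence xU: "x ` U = U" by (simp add: Bij_def bij_betw_def)
  have "(\<lambda>y\<in>U. inv_into U x y) \<in> carrier (SymR U)"
    using restrict_inv_into_Bij[OF xb] by (simp add: SymR_def)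
  moreover have "(\<lambda>y\<in>U. inv_into U x y) \<otimes>\<^bsub>SymR U\<^esub> x = \<one>\<^bsub>SymR U\<^esub>"
    using compose_id_inv_into[OF xU] by (simp add: SymR_def)
  ultimately show "\<exists>y\<in>carrier (SymR U). y \<otimes>\<^bsub>SymR U\<^esub> x = \<one>\<^bsub>SymR U\<^esub>" by blast
qed

lemma SymR_carrier: "carrier (SymR U) = Bij U" by (simp add: SymR_def)
lemma SymR_mult: "s \<otimes>\<^bsub>SymR U\<^esub> t = compose U t s" by (simp add: SymR_def)
lemma SymR_one: "\<one>\<^bsub>SymR U\<^esub> = (\<lambda>x\<in>U. x)" by (simp add: SymR_def)

lemma SymR_mult_app: "x \<in> U \<Longrightarrow> (s \<otimes>\<^bsub>SymR U\<^esub> t) x = t (s x)"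
  by (simp add: SymR_def compose_def)

lemma SymR_inv_app1: assumes "s \<in> carrier (SymR U)" "x \<in> U"
  shows "(inv\<^bsub>SymR U\<^esub> s) (s x) = x"
proof -
  interpret S: group "SymR U" by (rule SymR_group)
  have "x = (s \<otimes>\<^bsub>SymR U\<^esub> inv\<^bsub>SymR U\<^esub> s) x" using assms by (simp add: SymR_one)
  also have "\<dots> = (inv\<^bsub>SymR U\<^esub> s) (s x)" by (rule SymR_mult_app[OF assms(2)])
  finally show ?thesis by simp
qed

lemma SymR_inv_app2: assumes "s \<in> carrier (SymR U)" "x \<in> U"
  shows "s ((inv\<^bsub>SymR U\<^esub> s) x) = x"
proof -
  interpret S: group "SymR U" by (rule SymR_group)
  have "x = (inv\<^bsub>SymR U\<^esub> s \<otimes>\<^bsub>SymR U\<^esub> s) x" using assms by (simp add: SymR_one)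
  also have "\<dots> = s ((inv\<^bsub>SymR U\<^esub> s) x)" by (rule SymR_mult_app[OF assms(2)])
  finally show ?thesis by simp
qed

lemma SymR_in: "s \<in> carrier (SymR U) \<Longrightarrow> x \<in> U \<Longrightarrow> s x \<in> U"
  by (auto simp: SymR_carrier Bij_def bij_betw_def)

lemma SymR_inv_in: "s \<in> carrier (SymR U) \<Longrightarrow> x \<in> U \<Longrightarrow> (inv\<^bsub>SymR U\<^esub> s) x \<in> U"
  by (rule SymR_in[OF group.inv_closed[OF SymR_group]])

lemma SymR_ext: "s \<in> carrier (SymR U) \<Longrightarrow> t \<in> carrier (SymR U) \<Longrightarrow> (\<And>x. x \<in> U \<Longrightarrow> s x = t x) \<Longrightarrow> s = t"
  by (auto simp: SymR_carrier Bij_def intro: extensionalityI)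

lemma SymR_memI: "f \<in> extensional U \<Longrightarrow> bij_betw f U U \<Longrightarrow> f \<in> carrier (SymR U)"
  by (simp add: SymR_carrier Bij_def)

locale HT = group G for G (structure) +
  fixes p m :: nat and P M :: "'a set" and N :: "('a \<Rightarrow> 'a) set"
  assumes pr: "Factorial_Ring.prime p" and ordG: "order G = m * p" and fin: "finite (carrier G)"
    and ndvd: "\<not> p dvd m"
    and syl: "sylow_subgroup p P G" and uniq: "\<And>Q. sylow_subgroup p Q G \<Longrightarrow> Q = P"
    and Msub: "subgroup M G" and cardM: "card M = m"
    and autM: "\<not> p dvd card (auto (G\<lparr>carrier := M\<rparr>))"
    and NH: "N \<subseteq> Hol G" and reg: "regular_subgroup (carrier G) N"
begin

abbreviation "S \<equiv> SymR (carrier G)"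

lemma S_group: "group S" by (rule SymR_group)

sublocale S: group S by (rule SymR_group)



lemma rho_app: "x \<in> carrier G \<Longrightarrow> rho G g x = x \<otimes> g" by (simp add: rho_def)
lemma lam_app: "x \<in> carrier G \<Longrightarrow> lam G g x = g \<otimes> x" by (simp add: lam_def)

lemma rho_in: assumes g: "g \<in> carrier G" shows "rho G g \<in> carrier S"
proof (rule SymR_memI)
  show "rho G g \<in> extensional (carrier G)" by (simp add: rho_def)
  show "bij_betw (rho G g) (carrier G) (carrier G)"
  proof (rule bij_betw_imageI)
    show "inj_on (rho G g) (carrier G)" using g by (auto simp: inj_on_def rho_app)
    show "rho G g ` carrier G = carrier G"
    proof
      show "rho G g ` carrier G \<subseteq> carrier G" using g by (auto simp: rho_app)
      show "carrier G \<subseteq> rho G g ` carrier G"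
      proof
        fix x assume x: "x \<in> carrier G"
        have "x = rho G g (x \<otimes> inv g)" using x g by (simp add: rho_app m_assoc)
        thus "x \<in> rho G g ` carrier G" using x g by blast
      qed
    qed
  qed
qed

lemma lam_in: assumes g: "g \<in> carrier G" shows "lam G g \<in> carrier S"
proof (rule SymR_memI)
  show "lam G g \<in> extensional (carrier G)" by (simp add: lam_def)
  show "bij_betw (lam G g) (carrier G) (carrier G)"
  proof (rule bij_betw_imageI)
    show "inj_on (lam G g) (carrier G)" using g by (auto simp: inj_on_def lam_app)
    show "lam G g ` carrier G = carrier G"
    proof
      show "lam G g ` carrier G \<subseteq> carrier G" using g by (auto simp: lam_app)
      show "carrier G \<subseteq> lam G g ` carrier G"
      proof
        fix x assume x: "x \<in> carrier G"
        have "x = lam G g (inv g \<otimes> x)" using x g by (simp add: lam_app m_assoc[symmetric])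
        thus "x \<in> lam G g ` carrier G" using x g by blast
      qed
    qed
  qed
qed

lemma rho_mult: "g \<in> carrier G \<Longrightarrow> h \<in> carrier G \<Longrightarrow> rho G g \<otimes>\<^bsub>S\<^esub> rho G h = rho G (g \<otimes> h)"
  by (rule SymR_ext) (auto simp: rho_in SymR_mult_app rho_app m_assoc)

lemma lam_mult: "g \<in> carrier G \<Longrightarrow> h \<in> carrier G \<Longrightarrow> lam G g \<otimes>\<^bsub>S\<^esub> lam G h = lam G (h \<otimes> g)"
  by (rule SymR_ext) (auto simp: lam_in SymR_mult_app lam_app m_assoc)

lemma rho_lam_comm: "g \<in> carrier G \<Longrightarrow> h \<in> carrier G \<Longrightarrow> rho G g \<otimes>\<^bsub>S\<^esub> lam G h = lam G h \<otimes>\<^bsub>S\<^esub> rho G g"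
  by (rule SymR_ext) (auto simp: lam_in rho_in SymR_mult_app lam_app rho_app m_assoc)

lemma rho_one: "rho G \<one> = \<one>\<^bsub>S\<^esub>"
  by (rule SymR_ext[OF rho_in[OF one_closed] S.one_closed]) (simp add: SymR_one rho_app)

lemma rho_inv: "g \<in> carrier G \<Longrightarrow> inv\<^bsub>S\<^esub> (rho G g) = rho G (inv g)"
  by (rule S.inv_equality) (auto simp: rho_mult rho_in rho_one)

lemma Hol_prop:
  assumes s: "s \<in> Hol G" and x: "x \<in> carrier G" and y: "y \<in> carrier G"
  shows "s (x \<otimes> y) = s x \<otimes> inv (s \<one>) \<otimes> s y"
proof -
  have sS: "s \<in> carrier S" using s by (simp add: Hol_def)
  have "inv\<^bsub>S\<^esub> s \<otimes>\<^bsub>S\<^esub> rho G y \<otimes>\<^bsub>S\<^esub> s \<in> rho G ` carrier G"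
    using s y unfolding Hol_def by blast
  then obtain g where g: "g \<in> carrier G" and eq: "inv\<^bsub>S\<^esub> s \<otimes>\<^bsub>S\<^esub> rho G y \<otimes>\<^bsub>S\<^esub> s = rho G g"
    by blast
  have eq2: "rho G y \<otimes>\<^bsub>S\<^esub> s = s \<otimes>\<^bsub>S\<^esub> rho G g"
  proof -
    have "s \<otimes>\<^bsub>S\<^esub> rho G g = s \<otimes>\<^bsub>S\<^esub> (inv\<^bsub>S\<^esub> s \<otimes>\<^bsub>S\<^esub> rho G y \<otimes>\<^bsub>S\<^esub> s)" by (simp add: eq)
    also have "\<dots> = rho G y \<otimes>\<^bsub>S\<^esub> s" using sS rho_in[OF y]
      by (simp add: S.m_assoc[symmetric] S.r_inv)
    finally show ?thesis by simp
  qed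
  have key: "\<And>z. z \<in> carrier G \<Longrightarrow> s (z \<otimes> y) = s z \<otimes> g"
  proof -
    fix z assume z: "z \<in> carrier G"
    have "(rho G y \<otimes>\<^bsub>S\<^esub> s) z = (s \<otimes>\<^bsub>S\<^esub> rho G g) z" by (simp add: eq2)
    thus "s (z \<otimes> y) = s z \<otimes> g" using z sS by (simp add: SymR_mult_app rho_app SymR_in)
  qed
  have s1: "s \<one> \<in> carrier G" using sS by (simp add: SymR_in)
  have "s y = s \<one> \<otimes> g" using key[of \<one>] y by simp
  hence "g = inv (s \<one>) \<otimes> s y" using s1 g by (simp add: m_assoc[symmetric])
  thus ?thesis using key[OF x] x s1 sS y by (simp add: m_assoc SymR_in)
qed

lemma Nsub: "subgroup N S" using reg by (simp add: regular_subgroup_def)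
lemma N_trans: "x \<in> carrier G \<Longrightarrow> y \<in> carrier G \<Longrightarrow> \<exists>s\<in>N. s x = y"
  using reg by (simp add: regular_subgroup_def)
lemma N_stab: "x \<in> carrier G \<Longrightarrow> s \<in> N \<Longrightarrow> s x = x \<Longrightarrow> s = \<one>\<^bsub>S\<^esub>"
  using reg by (simp add: regular_subgroup_def)
lemma N_S: "s \<in> N \<Longrightarrow> s \<in> carrier S" by (rule subgroup.mem_carrier[OF Nsub])
lemma N_Hol: "s \<in> N \<Longrightarrow> s \<in> Hol G" using NH by blast

lemma N_eq: assumes s: "s \<in> N" and t: "t \<in> N" and e: "s \<one> = t \<one>" shows "s = t"
proof -
  have sS: "s \<in> carrier S" and tS: "t \<in> carrier S" using s t N_S by auto
  have u: "s \<otimes>\<^bsub>S\<^esub> inv\<^bsub>S\<^esub> t \<in> N" using s t Nsub by (simp add: subgroup.m_closed subgroup.m_inv_closed)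
  have "(s \<otimes>\<^bsub>S\<^esub> inv\<^bsub>S\<^esub> t) \<one> = \<one>" using e sS tS by (simp add: SymR_mult_app SymR_inv_app1)
  hence "s \<otimes>\<^bsub>S\<^esub> inv\<^bsub>S\<^esub> t = \<one>\<^bsub>S\<^esub>" using N_stab u by blast
  thus ?thesis using sS tS by (metis S.inv_equality S.inv_inv S.inv_closed)
qed

lemma nu_spec: assumes g: "g \<in> carrier G" shows "nu G N g \<in> N \<and> nu G N g \<one> = g"
proof -
  obtain s where s: "s \<in> N" "s \<one> = g" using N_trans[of \<one> g] g by auto
  have "\<exists>!s. s \<in> N \<and> s \<one> = g" using s N_eq by blast
  thus ?thesis unfolding nu_def by (rule theI')
qed

lemma nu_in: "g \<in> carrier G \<Longrightarrow> nu G N g \<in> N" using nu_spec by blast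
lemma nu_one_app: "g \<in> carrier G \<Longrightarrow> nu G N g \<one> = g" using nu_spec by blast
lemma nu_unique: "s \<in> N \<Longrightarrow> nu G N (s \<one>) = s"
  using nu_spec N_eq N_S SymR_in by (metis one_closed)

end

context HT begin

lemma cancel1: "x \<in> carrier G \<Longrightarrow> y \<in> carrier G \<Longrightarrow> x \<otimes> (inv x \<otimes> y) = y"
  by (simp add: m_assoc[symmetric])
lemma cancel2: "x \<in> carrier G \<Longrightarrow> y \<in> carrier G \<Longrightarrow> inv x \<otimes> (x \<otimes> y) = y"
  by (simp add: m_assoc[symmetric])

lemma sub_card_dvd:
  assumes H: "subgroup H G" and K: "subgroup K G" and KH: "K \<subseteq> H"
  shows "card K dvd card H"
proof -
  interpret H: group "G\<lparr>carrier := H\<rparr>" using subgroup.subgroup_is_group[OF H is_group] .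
  have "subgroup K (G\<lparr>carrier := H\<rparr>)" using subgroup_incl[OF K H KH] .
  from H.lagrange[OF this] show ?thesis by (metis dvd_triv_right order_def partial_object.select_convs(1) partial_object.surjective partial_object.update_convs(1))
qed

lemma Psub: "subgroup P G" using syl by (simp add: sylow_subgroup_def)

lemma p_gt1: "p > 1" using pr prime_gt_1_nat by blast

lemma card_dvd_order: "subgroup H G \<Longrightarrow> card H dvd order G"
  using lagrange by (metis dvd_triv_right)

lemma cardP: "card P = p"
proof -
  obtain k where k: "card P = p ^ k" and nd: "\<not> p dvd (order G div card P)"
    using syl by (auto simp: sylow_subgroup_def)
  have dv: "card P dvd m * p" using card_dvd_order[OF Psub] ordG by simp
  have "k = 1"
  proof (rule ccontr)
    assume "k \<noteq> 1"
    then consider "k = 0" | "k \<ge> 2" by linarith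
    thus False
    proof cases
      case 1 thus False using nd k ordG by simp
    next
      case 2
      hence "p^2 dvd card P" using k by (simp add: le_imp_power_dvd)
      hence "p * p dvd m * p" using dv by (simp add: power2_eq_square dvd_trans)
      hence "p dvd m" using p_gt1 by simp
      thus False using ndvd by simp
    qed
  qed
  thus ?thesis using k by simp
qed

lemma finP: "finite P" using cardP p_gt1 card.infinite by fastforce

lemma char_P: assumes f: "f \<in> hom G G" and inj: "inj_on f (carrier G)" shows "f ` P = P"
proof (rule uniq)
  interpret gh: group_hom G G f by (unfold_locales) (rule f)
  have sub: "subgroup (f ` P) G" by (rule gh.subgroup_img_is_subgroup[OF Psub])
  have c: "card (f ` P) = p"
    using card_image[OF inj_on_subset[OF inj subgroup.subset[OF Psub]]] cardP by simp
  show "sylow_subgroup p (f ` P) G"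
    unfolding sylow_subgroup_def using sub c ordG ndvd p_gt1
    by (auto intro: exI[of _ 1])
qed

definition conj :: "'a \<Rightarrow> 'a \<Rightarrow> 'a" where "conj g x = inv g \<otimes> x \<otimes> g"

lemma conj_hom: assumes g: "g \<in> carrier G" shows "conj g \<in> hom G G"
proof (rule homI)
  fix x assume "x \<in> carrier G" thus "conj g x \<in> carrier G" using g by (simp add: conj_def)
next
  fix x y assume x: "x \<in> carrier G" and y: "y \<in> carrier G"
  show "conj g (x \<otimes> y) = conj g x \<otimes> conj g y"
    unfolding conj_def using x y g by (simp add: m_assoc cancel1 cancel2)
qed

lemma conj_inj: assumes g: "g \<in> carrier G" shows "inj_on (conj g) (carrier G)"
proof (rule inj_onI)
  fix x y assume x: "x \<in> carrier G" and y: "y \<in> carrier G" and e: "conj g x = conj g y"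
  hence "inv g \<otimes> x \<otimes> g = inv g \<otimes> y \<otimes> g" by (simp add: conj_def)
  thus "x = y" using x y g by (simp add: m_assoc cancel1 cancel2)
qed

lemma P_normal: "g \<in> carrier G \<Longrightarrow> u \<in> P \<Longrightarrow> inv g \<otimes> u \<otimes> g \<in> P"
  using char_P[OF conj_hom conj_inj] unfolding conj_def by blast

lemma P_normal': assumes "g \<in> carrier G" "u \<in> P" shows "g \<otimes> u \<otimes> inv g \<in> P"
  using P_normal[of "inv g" u] assms by simp

lemma P_car: "u \<in> P \<Longrightarrow> u \<in> carrier G" by (rule subgroup.mem_carrier[OF Psub])
lemma M_car: "u \<in> M \<Longrightarrow> u \<in> carrier G" by (rule subgroup.mem_carrier[OF Msub])

lemma PM: "P \<inter> M = {\<one>}"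
proof -
  have sub: "subgroup (P \<inter> M) G" by (rule subgroups_Inter_pair[OF Psub Msub])
  have d1: "card (P \<inter> M) dvd p" using sub_card_dvd[OF Psub sub] cardP by simp
  have d2: "card (P \<inter> M) dvd m" using sub_card_dvd[OF Msub sub] cardM by simp
  have "card (P \<inter> M) = 1"
    using d1 d2 pr ndvd by (metis prime_nat_iff)
  moreover have "\<one> \<in> P \<inter> M" using sub subgroup.one_closed by blast
  ultimately show ?thesis by (metis card_1_singletonE singletonD)
qed

lemma PM_eq: "x \<in> M \<Longrightarrow> y \<in> M \<Longrightarrow> x \<otimes> inv y \<in> P \<Longrightarrow> x = y"
proof -
  assume x: "x \<in> M" and y: "y \<in> M" and xy: "x \<otimes> inv y \<in> P"
  have "x \<otimes> inv y \<in> M" using x y Msub by (simp add: subgroup.m_closed subgroup.m_inv_closed)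
  hence e: "x \<otimes> inv y = \<one>" using xy PM by blast
  have xc: "x \<in> carrier G" and yc: "y \<in> carrier G" using x y M_car by auto
  have "x = x \<otimes> (inv y \<otimes> y)" using xc yc by simp
  also have "\<dots> = (x \<otimes> inv y) \<otimes> y" using xc yc by (simp add: m_assoc)
  also have "\<dots> = y" using e yc by simp
  finally show "x = y" .
qed

lemma decomp: assumes x: "x \<in> carrier G" shows "\<exists>u\<in>P. \<exists>y\<in>M. x = u \<otimes> y"
proof -
  let ?f = "\<lambda>(u, y). u \<otimes> y"
  have inj: "inj_on ?f (P \<times> M)"
  proof (rule inj_onI, clarify)
    fix u y u' y' assume u: "u \<in> P" and y: "y \<in> M" and u': "u' \<in> P" and y': "y' \<in> M"
      and e: "u \<otimes> y = u' \<otimes> y'"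
    have uc: "u \<in> carrier G" "u' \<in> carrier G" "y \<in> carrier G" "y' \<in> carrier G"
      using u u' y y' P_car M_car by auto
    have "inv u' \<otimes> u = y' \<otimes> inv y"
    proof -
      have "inv u' \<otimes> u = inv u' \<otimes> (u \<otimes> y) \<otimes> inv y" using uc by (simp add: m_assoc cancel1 cancel2)
      also have "\<dots> = y' \<otimes> inv y" using uc e by (simp add: m_assoc[symmetric])
      finally show ?thesis .
    qed
    moreover have "inv u' \<otimes> u \<in> P" using u u' Psub by (simp add: subgroup.m_closed subgroup.m_inv_closed)
    ultimately have "y' \<otimes> inv y \<in> P" by simp
    hence "y' = y" using PM_eq y y' by blast
    thus "u = u' \<and> y = y'" using e uc by simp
  qed
  have finPM: "finite (P \<times> M)" using finP Msub fin by (meson finite_SigmaI rev_finite_subset subgroup.subset)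
  have "card (?f ` (P \<times> M)) = p * m" using card_image[OF inj] cardP cardM by (simp add: card_cartesian_product)
  moreover have "?f ` (P \<times> M) \<subseteq> carrier G" using P_car M_car by auto
  moreover have "card (carrier G) = p * m" using ordG by (simp add: order_def)
  ultimately have "?f ` (P \<times> M) = carrier G" using card_subset_eq[OF fin] by metis
  thus ?thesis using x by force
qed

lemma pow_p: assumes u: "u \<in> P" shows "u [^] p = \<one>"
proof -
  interpret H: group "G\<lparr>carrier := P\<rparr>" using subgroup.subgroup_is_group[OF Psub is_group] .
  have "u [^]\<^bsub>G\<lparr>carrier := P\<rparr>\<^esub> order (G\<lparr>carrier := P\<rparr>) = \<one>\<^bsub>G\<lparr>carrier := P\<rparr>\<^esub>"
    using H.pow_order_eq_1 u by simp
  thus ?thesis using cardP by (simp add: order_def nat_pow_consistent[symmetric])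
qed

lemma ord_P: assumes w: "w \<in> P" "w \<noteq> \<one>" shows "ord w = p"
proof -
  have wc: "w \<in> carrier G" using w P_car by auto
  have "ord w dvd p" using pow_eq_id[OF wc] pow_p[OF w(1)] by simp
  moreover have "ord w \<noteq> 1" using ord_eq_1[OF wc] w by simp
  ultimately show ?thesis using pr by (metis prime_nat_iff)
qed

lemma cyclic: assumes w: "w \<in> P" "w \<noteq> \<one>" and u: "u \<in> P" shows "\<exists>k::nat. u = w [^] k"
proof -
  have wc: "w \<in> carrier G" using w P_car by auto
  have o: "ord w = p" using ord_P[OF w] .
  have gsub: "generate G {w} \<subseteq> P" using generate_subgroup_incl[OF _ Psub] w by simp
  have "card (generate G {w}) = p" using generate_pow_card[OF wc] o by simp
  hence "generate G {w} = P" using gsub finP cardP by (metis card_subset_eq)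
  moreover have "generate G {w} = {w [^] k | k. k \<in> (UNIV :: nat set)}"
    using generate_pow_nat[OF wc] o p_gt1 by simp
  ultimately show ?thesis using u by auto
qed

lemma P_comm: assumes u: "u \<in> P" and v: "v \<in> P" shows "u \<otimes> v = v \<otimes> u"
proof (cases "u = \<one>")
  case True thus ?thesis using v P_car by simp
next
  case False
  then obtain k :: nat where k: "v = u [^] k" using cyclic[OF u False v] by blast
  have uc: "u \<in> carrier G" using u P_car by auto
  show ?thesis using nat_pow_comm[OF uc, of 1 k] k uc by simp
qed

end

context HT begin

definition Aut_of :: "('a \<Rightarrow> 'a) \<Rightarrow> 'a \<Rightarrow> 'a" where "Aut_of s x = s x \<otimes> inv (s \<one>)"

lemma N_app: "s \<in> N \<Longrightarrow> x \<in> carrier G \<Longrightarrow> s x \<in> carrier G"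
  by (rule SymR_in[OF N_S])

lemma A_car: "s \<in> N \<Longrightarrow> x \<in> carrier G \<Longrightarrow> Aut_of s x \<in> carrier G"
  by (simp add: Aut_of_def N_app)

lemma A_mult: assumes s: "s \<in> N" and x: "x \<in> carrier G" and y: "y \<in> carrier G"
  shows "Aut_of s (x \<otimes> y) = Aut_of s x \<otimes> Aut_of s y"
proof -
  have c: "s x \<in> carrier G" "s y \<in> carrier G" "s \<one> \<in> carrier G" using s x y N_app by auto
  have "s (x \<otimes> y) = s x \<otimes> inv (s \<one>) \<otimes> s y" using Hol_prop[OF N_Hol[OF s] x y] .
  thus ?thesis unfolding Aut_of_def using c by (simp add: m_assoc)
qed

lemma s_eq: "s \<in> N \<Longrightarrow> x \<in> carrier G \<Longrightarrow> s x = Aut_of s x \<otimes> s \<one>"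
  by (simp add: Aut_of_def N_app m_assoc)

lemma A_one: "s \<in> N \<Longrightarrow> Aut_of s \<one> = \<one>"
  by (simp add: Aut_of_def N_app)

lemma A_hom: "s \<in> N \<Longrightarrow> Aut_of s \<in> hom G G"
  by (rule homI) (simp_all add: A_car A_mult)

lemma A_inj: assumes s: "s \<in> N" shows "inj_on (Aut_of s) (carrier G)"
proof (rule inj_onI)
  fix x y assume x: "x \<in> carrier G" and y: "y \<in> carrier G" and e: "Aut_of s x = Aut_of s y"
  have "s x = s y" using s_eq[OF s x] s_eq[OF s y] e by simp
  moreover have "inj_on s (carrier G)" using N_S[OF s] by (simp add: SymR_carrier Bij_def bij_betw_def)
  ultimately show "x = y" using x y by (simp add: inj_on_def)
qed

lemma A_P: "s \<in> N \<Longrightarrow> Aut_of s ` P = P"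
  by (rule char_P[OF A_hom A_inj])

lemma A_P_mem: "s \<in> N \<Longrightarrow> u \<in> P \<Longrightarrow> Aut_of s u \<in> P"
  using A_P by blast

lemma A_P_rev: assumes s: "s \<in> N" and x: "x \<in> carrier G" and ax: "Aut_of s x \<in> P" shows "x \<in> P"
proof -
  have "Aut_of s x \<in> Aut_of s ` P" using A_P[OF s] ax by simp
  then obtain y where y: "y \<in> P" "Aut_of s y = Aut_of s x" unfolding image_iff by (elim bexE) (rule that, simp_all)
  have "y = x" using A_inj[OF s] y x P_car by (meson inj_onD)
  thus ?thesis using y by simp
qed

lemma A_mult_S: assumes s: "s \<in> N" and t: "t \<in> N" and x: "x \<in> carrier G"
  shows "Aut_of (s \<otimes>\<^bsub>S\<^esub> t) x = Aut_of t (Aut_of s x)"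
proof -
  have c: "Aut_of s x \<in> carrier G" "s \<one> \<in> carrier G" "t \<one> \<in> carrier G"
    "Aut_of t (Aut_of s x) \<in> carrier G" "Aut_of t (s \<one>) \<in> carrier G"
    using s t x N_app A_car by auto
  have sx: "s x \<in> carrier G" using N_app[OF s x] .
  have "(s \<otimes>\<^bsub>S\<^esub> t) x = t (s x)" using x by (rule SymR_mult_app)
  also have "\<dots> = Aut_of t (s x) \<otimes> t \<one>" by (rule s_eq[OF t sx])
  also have "\<dots> = Aut_of t (Aut_of s x \<otimes> s \<one>) \<otimes> t \<one>" using s_eq[OF s x] by simp
  also have "\<dots> = Aut_of t (Aut_of s x) \<otimes> Aut_of t (s \<one>) \<otimes> t \<one>"
    using c by (simp add: A_mult[OF t])
  finally have e1: "(s \<otimes>\<^bsub>S\<^esub> t) x = Aut_of t (Aut_of s x) \<otimes> Aut_of t (s \<one>) \<otimes> t \<one>" .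
  have "(s \<otimes>\<^bsub>S\<^esub> t) \<one> = t (s \<one>)" by (rule SymR_mult_app) simp
  also have "\<dots> = Aut_of t (s \<one>) \<otimes> t \<one>" by (rule s_eq[OF t c(2)])
  finally have e2: "(s \<otimes>\<^bsub>S\<^esub> t) \<one> = Aut_of t (s \<one>) \<otimes> t \<one>" .
  show ?thesis unfolding Aut_of_def[of "s \<otimes>\<^bsub>S\<^esub> t"] e1 e2 using c
    by (simp add: m_assoc)
qed

lemma A_one_S: "x \<in> carrier G \<Longrightarrow> Aut_of \<one>\<^bsub>S\<^esub> x = x"
  by (simp add: Aut_of_def SymR_one)

lemma N_pow: "s \<in> N \<Longrightarrow> s [^]\<^bsub>S\<^esub> (n::nat) \<in> N"
  by (induction n) (simp_all add: subgroup.one_closed[OF Nsub] subgroup.m_closed[OF Nsub])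

lemma A_pow: assumes s: "s \<in> N" and x: "x \<in> carrier G"
  shows "Aut_of (s [^]\<^bsub>S\<^esub> (n::nat)) x = (Aut_of s ^^ n) x"
proof (induction n)
  case 0 thus ?case using x by (simp add: A_one_S)
next
  case (Suc n)
  have "Aut_of (s [^]\<^bsub>S\<^esub> Suc n) x = Aut_of (s [^]\<^bsub>S\<^esub> n \<otimes>\<^bsub>S\<^esub> s) x" by simp
  also have "\<dots> = Aut_of s (Aut_of (s [^]\<^bsub>S\<^esub> n) x)" by (rule A_mult_S[OF N_pow[OF s] s x])
  finally show ?case using Suc by simp
qed

lemma nuP_mult: assumes g: "g \<in> P" and h: "h \<in> P"
  shows "nu G N g \<otimes>\<^bsub>S\<^esub> nu G N h = nu G N (Aut_of (nu G N h) g \<otimes> h)"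
    and "Aut_of (nu G N h) g \<otimes> h \<in> P"
proof -
  have gc: "g \<in> carrier G" and hc: "h \<in> carrier G" using g h P_car by auto
  have n: "nu G N g \<in> N" "nu G N h \<in> N" using nu_in gc hc by auto
  have mem: "nu G N g \<otimes>\<^bsub>S\<^esub> nu G N h \<in> N" using subgroup.m_closed[OF Nsub n] .
  have "(nu G N g \<otimes>\<^bsub>S\<^esub> nu G N h) \<one> = nu G N h (nu G N g \<one>)" by (rule SymR_mult_app) simp
  also have "\<dots> = nu G N h g" using nu_one_app[OF gc] by simp
  also have "\<dots> = Aut_of (nu G N h) g \<otimes> nu G N h \<one>" by (rule s_eq[OF n(2) gc])
  finally have e: "(nu G N g \<otimes>\<^bsub>S\<^esub> nu G N h) \<one> = Aut_of (nu G N h) g \<otimes> h"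
    using nu_one_app[OF hc] by simp
  show "nu G N g \<otimes>\<^bsub>S\<^esub> nu G N h = nu G N (Aut_of (nu G N h) g \<otimes> h)"
    using nu_unique[OF mem] unfolding e by (rule sym)
  show "Aut_of (nu G N h) g \<otimes> h \<in> P" using A_P_mem[OF n(2) g] h subgroup.m_closed[OF Psub] by blast
qed

lemma nuP_inv: assumes g: "g \<in> P" shows "inv\<^bsub>S\<^esub> (nu G N g) \<in> nu G N ` P"
proof -
  have gc: "g \<in> carrier G" using g P_car by auto
  have n: "nu G N g \<in> N" using nu_in gc by auto
  have i: "inv\<^bsub>S\<^esub> (nu G N g) \<in> N" using n subgroup.m_inv_closed[OF Nsub] by blast
  define y where "y = (inv\<^bsub>S\<^esub> (nu G N g)) \<one>"
  have yc: "y \<in> carrier G" unfolding y_def using i N_app by simp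
  have "nu G N g y = \<one>" unfolding y_def using SymR_inv_app2[OF N_S[OF n]] by simp
  hence "Aut_of (nu G N g) y \<otimes> g = \<one>" using s_eq[OF n yc] nu_one_app[OF gc] by simp
  hence "Aut_of (nu G N g) y = inv g" using gc A_car[OF n yc] by (metis inv_equality inv_inv)
  hence "Aut_of (nu G N g) y \<in> P" using g subgroup.m_inv_closed[OF Psub] by simp
  hence yP: "y \<in> P" using A_P_rev[OF n yc] by simp
  have "nu G N y = inv\<^bsub>S\<^esub> (nu G N g)" unfolding y_def by (rule nu_unique[OF i])
  thus ?thesis using yP by (metis imageI)
qed

lemma nuP_N: "nu G N ` P \<subseteq> N" using nu_in P_car by blast

lemma nuP_sub_S: "subgroup (nu G N ` P) S"
proof (rule S.subgroupI)
  show "nu G N ` P \<subseteq> carrier S" using nuP_N N_S by blast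
  show "nu G N ` P \<noteq> {}" using subgroup.one_closed[OF Psub] by blast
  show "\<And>a. a \<in> nu G N ` P \<Longrightarrow> inv\<^bsub>S\<^esub> a \<in> nu G N ` P" using nuP_inv by blast
  show "\<And>a b. a \<in> nu G N ` P \<Longrightarrow> b \<in> nu G N ` P \<Longrightarrow> a \<otimes>\<^bsub>S\<^esub> b \<in> nu G N ` P"
    using nuP_mult by blast
qed

lemma nu_inj: "inj_on (nu G N) (carrier G)"
  by (metis inj_onI nu_one_app)

lemma card_nuP: "card (nu G N ` P) = p"
  using card_image[OF inj_on_subset[OF nu_inj]] P_car cardP by (metis subsetI)

lemma N_eq_img: "N = nu G N ` carrier G"
proof
  show "N \<subseteq> nu G N ` carrier G"
  proof
    fix s assume s: "s \<in> N"
    have "s = nu G N (s \<one>)" using nu_unique[OF s] by simp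
    thus "s \<in> nu G N ` carrier G" using N_app[OF s] by blast
  qed
  show "nu G N ` carrier G \<subseteq> N" using nu_in by blast
qed

lemma card_N: "card N = m * p"
  using N_eq_img card_image[OF nu_inj] ordG by (simp add: order_def)

lemma part1: "subgroup (nu G N ` P) (S\<lparr>carrier := N\<rparr>)"
  by (rule S.subgroup_incl[OF nuP_sub_S Nsub nuP_N])

lemma part1b: "sylow_subgroup p (nu G N ` P) (S\<lparr>carrier := N\<rparr>)"
  unfolding sylow_subgroup_def using part1 card_nuP card_N ndvd p_gt1
  by (auto simp: order_def intro: exI[of _ 1])

lemma nu_pow_p: assumes g: "g \<in> P" shows "nu G N g [^]\<^bsub>S\<^esub> p = \<one>\<^bsub>S\<^esub>"
proof -
  interpret H: group "S\<lparr>carrier := nu G N ` P\<rparr>" using subgroup.subgroup_is_group[OF nuP_sub_S S.is_group] .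
  have "nu G N g [^]\<^bsub>S\<lparr>carrier := nu G N ` P\<rparr>\<^esub> order (S\<lparr>carrier := nu G N ` P\<rparr>) = \<one>\<^bsub>S\<lparr>carrier := nu G N ` P\<rparr>\<^esub>"
    using H.pow_order_eq_1 g by simp
  thus ?thesis using card_nuP by (simp add: order_def S.nat_pow_consistent[symmetric])
qed

lemma alpha_p: assumes g: "g \<in> P" and x: "x \<in> carrier G"
  shows "(Aut_of (nu G N g) ^^ p) x = x"
proof -
  have n: "nu G N g \<in> N" using nu_in g P_car by auto
  show ?thesis using A_pow[OF n x, of p] nu_pow_p[OF g] A_one_S[OF x] by simp
qed

end

context HT begin

lemma exists_nontriv: "\<exists>w\<in>P. w \<noteq> \<one>"
proof (rule ccontr)
  assume "\<not> (\<exists>w\<in>P. w \<noteq> \<one>)"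
  hence "P \<subseteq> {\<one>}" by blast
  hence "card P \<le> 1" using card_mono[of "{\<one>}" P] by simp
  thus False using cardP p_gt1 by simp
qed

lemma hom_pow: "f \<in> hom G G \<Longrightarrow> x \<in> carrier G \<Longrightarrow> f (x [^] (k::nat)) = f x [^] k"
  using hom_nat_pow[of f G G x k] is_group by simp

lemma pow_eq_mod: assumes w: "w \<in> P" "w \<noteq> \<one>"
  shows "w [^] (a::nat) = w [^] (b::nat) \<longleftrightarrow> int p dvd (int b - int a)"
proof -
  have wc: "w \<in> carrier G" using w P_car by auto
  have "w [^] a = w [^] b \<longleftrightarrow> w [^] (int a) = w [^] (int b)" by (simp add: int_pow_int)
  also have "\<dots> \<longleftrightarrow> int (ord w) dvd (int b - int a)" by (rule int_pow_eq[OF wc])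
  finally show ?thesis using ord_P[OF w] by simp
qed

lemma alpha_fix_P: assumes g: "g \<in> P" and u: "u \<in> P" shows "Aut_of (nu G N g) u = u"
proof -
  define \<alpha> where "\<alpha> = Aut_of (nu G N g)"
  have n: "nu G N g \<in> N" using nu_in g P_car by auto
  have ah: "\<alpha> \<in> hom G G" unfolding \<alpha>_def by (rule A_hom[OF n])
  obtain w where w: "w \<in> P" "w \<noteq> \<one>" using exists_nontriv by blast
  have wc: "w \<in> carrier G" using w P_car by auto
  have "\<alpha> w \<in> P" unfolding \<alpha>_def by (rule A_P_mem[OF n w(1)])
  then obtain e :: nat where e: "\<alpha> w = w [^] e" using cyclic[OF w] by blast
  have iter: "(\<alpha> ^^ k) w = w [^] (e ^ k)" for k
  proof (induction k)
    case 0 thus ?case using wc by simp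
  next
    case (Suc k)
    have "(\<alpha> ^^ Suc k) w = \<alpha> (w [^] (e ^ k))" using Suc by simp
    also have "\<dots> = (w [^] e) [^] (e ^ k)" using hom_pow[OF ah wc] e by simp
    also have "\<dots> = w [^] (e ^ Suc k)" using wc by (simp add: nat_pow_pow)
    finally show ?case .
  qed
  have "(\<alpha> ^^ p) w = w" unfolding \<alpha>_def by (rule alpha_p[OF g wc])
  hence "w [^] (e ^ p) = w [^] (1::nat)" using iter wc by simp
  from iffD1[OF pow_eq_mod[OF w, of "e ^ p" 1] this] have d1: "int p dvd (1 - int e ^ p)" by simp
  have nd: "\<not> p dvd e"
  proof
    assume "p dvd e"
    hence "w [^] e = \<one>" using pow_eq_id[OF wc] ord_P[OF w] by simp
    hence "\<alpha> w = \<alpha> \<one>" using e A_one[OF n] unfolding \<alpha>_def by simp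
    hence "w = \<one>" using A_inj[OF n] wc unfolding \<alpha>_def by (meson inj_onD one_closed)
    thus False using w by simp
  qed
  have "[e ^ (p - 1) = 1] (mod p)" by (rule fermat_theorem[OF pr nd])
  hence "[int e ^ (p - 1) = 1] (mod int p)" using cong_int_iff[of "e ^ (p - 1)" 1 p] by simp
  hence d2: "int p dvd (int e ^ (p - 1) - 1)" by (simp add: cong_iff_dvd_diff)
  have "int e ^ p = int e * int e ^ (p - 1)" using p_gt1 by (metis Suc_diff_1 less_trans zero_less_one power_Suc)
  hence "int e ^ p - int e = int e * (int e ^ (p - 1) - 1)" by (simp add: algebra_simps)
  hence d3: "int p dvd (int e ^ p - int e)" using d2 by simp
  have "1 - int e = (1 - int e ^ p) + (int e ^ p - int e)" by simp
  hence "int p dvd (1 - int e)" using d1 d3 by (metis dvd_add)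
  hence "w [^] e = w [^] (1::nat)" using iffD2[OF pow_eq_mod[OF w, of e 1]] by simp
  hence aw: "\<alpha> w = w" using e wc by simp
  obtain k :: nat where k: "u = w [^] k" using cyclic[OF w u] by blast
  have "\<alpha> u = w [^] k" using k hom_pow[OF ah wc] aw by simp
  thus ?thesis using k unfolding \<alpha>_def by simp
qed

end

context HT begin

definition proj :: "'a \<Rightarrow> 'a" where "proj z = (THE y. y \<in> M \<and> z \<otimes> inv y \<in> P)"

lemma proj_uniq0: assumes z: "z \<in> carrier G" and y: "y \<in> M" "z \<otimes> inv y \<in> P"
  and y': "y' \<in> M" "z \<otimes> inv y' \<in> P" shows "y = y'"
proof -
  have c: "y \<in> carrier G" "y' \<in> carrier G" using y y' M_car by auto
  have "inv (z \<otimes> inv y) \<otimes> (z \<otimes> inv y') \<in> P"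
    using y(2) y'(2) Psub by (simp add: subgroup.m_closed subgroup.m_inv_closed)
  moreover have "inv (z \<otimes> inv y) \<otimes> (z \<otimes> inv y') = y \<otimes> inv y'"
    using z c by (simp add: inv_mult_group m_assoc cancel2)
  ultimately show ?thesis using PM_eq y(1) y'(1) by simp
qed

lemma proj: assumes z: "z \<in> carrier G" shows "proj z \<in> M \<and> z \<otimes> inv (proj z) \<in> P"
proof -
  obtain u y where u: "u \<in> P" and y: "y \<in> M" and e: "z = u \<otimes> y" using decomp[OF z] by blast
  have "z \<otimes> inv y = u" using e u y P_car M_car by (simp add: m_assoc)
  hence ex: "y \<in> M \<and> z \<otimes> inv y \<in> P" using u y by simp
  have "\<exists>!y. y \<in> M \<and> z \<otimes> inv y \<in> P" using ex proj_uniq0[OF z] by blast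
  thus ?thesis unfolding proj_def by (rule theI')
qed

lemma proj_M: "z \<in> carrier G \<Longrightarrow> proj z \<in> M" using proj by blast
lemma proj_P: "z \<in> carrier G \<Longrightarrow> z \<otimes> inv (proj z) \<in> P" using proj by blast
lemma proj_unique: "z \<in> carrier G \<Longrightarrow> y \<in> M \<Longrightarrow> z \<otimes> inv y \<in> P \<Longrightarrow> proj z = y"
  using proj proj_uniq0 by blast

lemma alpha_car: "g \<in> P \<Longrightarrow> x \<in> carrier G \<Longrightarrow> Aut_of (nu G N g) x \<in> carrier G"
  using A_car nu_in P_car by blast

lemma alpha_iter_car: "g \<in> P \<Longrightarrow> x \<in> carrier G \<Longrightarrow> (Aut_of (nu G N g) ^^ n) x \<in> carrier G"
  by (induction n) (simp_all add: alpha_car)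

lemma beta_mult: assumes g: "g \<in> P" and x: "x \<in> M" and y: "y \<in> M"
  shows "proj (Aut_of (nu G N g) (x \<otimes> y)) = proj (Aut_of (nu G N g) x) \<otimes> proj (Aut_of (nu G N g) y)"
proof -
  define a where "a = Aut_of (nu G N g)"
  have n: "nu G N g \<in> N" using nu_in g P_car by auto
  have xc: "x \<in> carrier G" and yc: "y \<in> carrier G" using x y M_car by auto
  have ax: "a x \<in> carrier G" and ay: "a y \<in> carrier G" unfolding a_def using alpha_car g xc yc by auto
  define b1 b2 where "b1 = proj (a x)" and "b2 = proj (a y)"
  have b1M: "b1 \<in> M" and b2M: "b2 \<in> M" unfolding b1_def b2_def using proj_M ax ay by auto
  have b1c: "b1 \<in> carrier G" and b2c: "b2 \<in> carrier G" using b1M b2M M_car by auto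
  have p1: "a x \<otimes> inv b1 \<in> P" and p2: "a y \<otimes> inv b2 \<in> P" unfolding b1_def b2_def using proj_P ax ay by auto
  have p3: "b1 \<otimes> (a y \<otimes> inv b2) \<otimes> inv b1 \<in> P" using P_normal'[OF b1c p2] .
  have "a (x \<otimes> y) \<otimes> inv (b1 \<otimes> b2) = (a x \<otimes> inv b1) \<otimes> (b1 \<otimes> (a y \<otimes> inv b2) \<otimes> inv b1)"
    using A_mult[OF n xc yc] ax ay b1c b2c unfolding a_def[symmetric]
    by (simp add: m_assoc inv_mult_group cancel1 cancel2)
  also have "\<dots> \<in> P" using p1 p3 subgroup.m_closed[OF Psub] by blast
  finally have "a (x \<otimes> y) \<otimes> inv (b1 \<otimes> b2) \<in> P" .
  moreover have "a (x \<otimes> y) \<in> carrier G" unfolding a_def using alpha_car g xc yc by auto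
  moreover have "b1 \<otimes> b2 \<in> M" using b1M b2M subgroup.m_closed[OF Msub] by blast
  ultimately show ?thesis unfolding a_def b1_def b2_def using proj_unique by blast
qed

lemma beta_iter: assumes g: "g \<in> P" and x: "x \<in> M"
  shows "((\<lambda>z. proj (Aut_of (nu G N g) z)) ^^ k) x = proj ((Aut_of (nu G N g) ^^ k) x)"
proof (induction k)
  case 0 thus ?case using x M_car proj_unique[of x x] subgroup.one_closed[OF Psub] by simp
next
  case (Suc k)
  define a where "a = Aut_of (nu G N g)"
  have n: "nu G N g \<in> N" using nu_in g P_car by auto
  define z where "z = (a ^^ k) x"
  have zc: "z \<in> carrier G" unfolding z_def a_def using alpha_iter_car g x M_car by auto
  define y where "y = proj z"
  have yM: "y \<in> M" and yc: "y \<in> carrier G" unfolding y_def using proj_M zc M_car by auto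
  define u where "u = z \<otimes> inv y"
  have uP: "u \<in> P" unfolding u_def y_def using proj_P zc by auto
  have uc: "u \<in> carrier G" using uP P_car by auto
  have zuy: "z = u \<otimes> y" unfolding u_def using zc yc by (simp add: m_assoc)
  have ayc: "a y \<in> carrier G" unfolding a_def using alpha_car g yc by auto
  define y' where "y' = proj (a y)"
  have y'M: "y' \<in> M" and y'c: "y' \<in> carrier G" unfolding y'_def using proj_M ayc M_car by auto
  have q: "a y \<otimes> inv y' \<in> P" unfolding y'_def using proj_P ayc by auto
  have auP: "a u \<in> P" unfolding a_def by (rule A_P_mem[OF n uP])
  have auc: "a u \<in> carrier G" using auP P_car by auto
  have "a z \<otimes> inv y' = a u \<otimes> (a y \<otimes> inv y')"
    using zuy A_mult[OF n uc yc] unfolding a_def[symmetric] using auc ayc y'c by (simp add: m_assoc)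
  also have "\<dots> \<in> P" using auP q subgroup.m_closed[OF Psub] by blast
  finally have "proj (a z) = y'" using proj_unique[OF _ y'M] zc alpha_car g unfolding a_def by blast
  hence "proj ((a ^^ Suc k) x) = proj (a (proj ((a ^^ k) x)))" unfolding y'_def y_def z_def by simp
  thus ?case using Suc unfolding a_def by simp
qed

lemma beta_p: assumes g: "g \<in> P" and x: "x \<in> M"
  shows "((\<lambda>z. proj (Aut_of (nu G N g) z)) ^^ p) x = x"
proof -
  have xc: "x \<in> carrier G" using x M_car by auto
  have "((\<lambda>z. proj (Aut_of (nu G N g) z)) ^^ p) x = proj x"
    using beta_iter[OF g x] alpha_p[OF g xc] by simp
  also have "\<dots> = x" using proj_unique[OF xc x] xc subgroup.one_closed[OF Psub] by simp
  finally show ?thesis .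
qed

end

context HT begin

lemma beta_id: assumes g: "g \<in> P" and x: "x \<in> M"
  shows "proj (Aut_of (nu G N g) x) = x"
proof -
  define b where "b = (\<lambda>z. proj (Aut_of (nu G N g) z))"
  define br where "br = restrict b M"
  define MG where "MG = G\<lparr>carrier := M\<rparr>"
  define AG where "AG = AutoGroup MG"
  have grpM: "group MG" unfolding MG_def by (rule subgroup.subgroup_is_group[OF Msub is_group])
  have grpA: "group AG" unfolding AG_def by (rule group.AutoGroup[OF grpM])
  have carMG: "carrier MG = M" unfolding MG_def by simp
  have bM: "b z \<in> M" if "z \<in> M" for z
    unfolding b_def using proj_M alpha_car g that M_car by blast
  have biter: "(b ^^ k) z \<in> M" if "z \<in> M" for z k
    using that by (induction k) (simp_all add: bM)
  have bp: "(b ^^ p) z = z" if "z \<in> M" for z unfolding b_def using beta_p[OF g that] .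
  have pS: "p = Suc (p - 1)" using p_gt1 by simp
  have bp2: "(b ^^ (p - 1)) (b z) = z" if "z \<in> M" for z
    using bp[OF that] pS by (metis funpow_Suc_right o_apply)
  have hom: "br \<in> hom MG MG"
  proof (rule homI)
    fix z assume "z \<in> carrier MG" thus "br z \<in> carrier MG" using bM by (simp add: br_def carMG)
  next
    fix y z assume "y \<in> carrier MG" "z \<in> carrier MG"
    hence y: "y \<in> M" and z: "z \<in> M" by (simp_all add: carMG)
    have "y \<otimes> z \<in> M" using y z subgroup.m_closed[OF Msub] by blast
    thus "br (y \<otimes>\<^bsub>MG\<^esub> z) = br y \<otimes>\<^bsub>MG\<^esub> br z"
      using y z unfolding br_def b_def MG_def by (simp add: beta_mult[OF g y z])
  qed
  have bij: "bij_betw br M M"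
  proof (rule bij_betw_imageI)
    show "inj_on br M"
    proof (rule inj_onI)
      fix y z assume y: "y \<in> M" and z: "z \<in> M" and e: "br y = br z"
      hence "b y = b z" by (simp add: br_def)
      thus "y = z" using bp2[OF y] bp2[OF z] by metis
    qed
    show "br ` M = M"
    proof
      show "br ` M \<subseteq> M" using bM by (auto simp: br_def)
      show "M \<subseteq> br ` M"
      proof
        fix z assume z: "z \<in> M"
        have "(b ^^ (p - 1)) z \<in> M" using biter[OF z] .
        moreover have "br ((b ^^ (p - 1)) z) = z" using z bp[OF z] pS biter[OF z]
          by (simp add: br_def) (metis funpow_Suc_right funpow_swap1 o_apply)
        ultimately show "z \<in> br ` M" by (metis imageI)
      qed
    qed
  qed
  have brA: "br \<in> carrier AG"
    unfolding AG_def AutoGroup_def auto_def using hom bij carMG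
    by (simp add: Bij_def br_def)
  have carA: "carrier AG \<subseteq> Bij M" unfolding AG_def AutoGroup_def auto_def using carMG by (simp add: BijGroup_def)
  have multA: "f \<otimes>\<^bsub>AG\<^esub> h = compose M f h" if "f \<in> carrier AG" "h \<in> carrier AG" for f h
    using that carA unfolding AG_def AutoGroup_def using carMG by (auto simp: BijGroup_def)
  have oneA: "\<one>\<^bsub>AG\<^esub> = (\<lambda>x\<in>M. x)" unfolding AG_def AutoGroup_def using carMG by (simp add: BijGroup_def)
  have powA: "br [^]\<^bsub>AG\<^esub> (k::nat) = restrict (b ^^ k) M" for k
  proof (induction k)
    case 0 thus ?case using oneA by simp
  next
    case (Suc k)
    have c: "br [^]\<^bsub>AG\<^esub> k \<in> carrier AG" using monoid.nat_pow_closed[OF group.is_monoid[OF grpA] brA] by blast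
    have "br [^]\<^bsub>AG\<^esub> Suc k = br [^]\<^bsub>AG\<^esub> k \<otimes>\<^bsub>AG\<^esub> br" by simp
    also have "\<dots> = compose M (br [^]\<^bsub>AG\<^esub> k) br" using multA[OF c brA] .
    also have "\<dots> = restrict (b ^^ Suc k) M"
      unfolding compose_def Suc.IH
      by (rule restrict_ext) (simp add: br_def bM funpow_swap1)
    finally show ?case .
  qed
  have "br [^]\<^bsub>AG\<^esub> p = \<one>\<^bsub>AG\<^esub>" unfolding powA oneA using bp by (auto intro: restrict_ext)
  hence d1: "group.ord AG br dvd p" using group.pow_eq_id[OF grpA brA] by simp
  have d2: "group.ord AG br dvd order AG" by (rule group.ord_dvd_group_order[OF grpA brA])
  have "order AG = card (auto MG)" unfolding AG_def AutoGroup_def order_def by simp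
  hence "\<not> p dvd order AG" using autM unfolding MG_def by simp
  hence "group.ord AG br \<noteq> p" using d2 by metis
  hence "group.ord AG br = 1" using d1 pr by (metis prime_nat_iff)
  hence "br = \<one>\<^bsub>AG\<^esub>" using group.ord_eq_1[OF grpA brA] by simp
  hence "br x = x" using oneA x by simp
  thus ?thesis using x unfolding br_def b_def by simp
qed

lemma delta_M: assumes g: "g \<in> P" and x: "x \<in> M" shows "Aut_of (nu G N g) x \<otimes> inv x \<in> P"
  using proj_P[OF alpha_car[OF g M_car[OF x]]] beta_id[OF g x] by simp

end

context HT begin

abbreviation "PG \<equiv> G\<lparr>carrier := P\<rparr>"

lemma comm_PG: "comm_group PG"
  by (rule group.group_comm_groupI[OF subgroup.subgroup_is_group[OF Psub is_group]]) (simp add: P_comm)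

lemma conj_P: "x \<in> carrier G \<Longrightarrow> u \<in> P \<Longrightarrow> conj x u \<in> P"
  unfolding conj_def by (rule P_normal)

lemma conj_mult: "x \<in> carrier G \<Longrightarrow> a \<in> carrier G \<Longrightarrow> b \<in> carrier G \<Longrightarrow> conj x (a \<otimes> b) = conj x a \<otimes> conj x b"
  using conj_hom by (simp add: hom_mult)

lemma conj_finprod: assumes x: "x \<in> carrier G"
  shows "finite A \<Longrightarrow> f \<in> A \<rightarrow> P \<Longrightarrow> finprod PG (\<lambda>y. conj x (f y)) A = conj x (finprod PG f A)"
proof (induction A rule: finite_induct)
  case empty
  interpret PG: comm_group PG by (rule comm_PG)
  show ?case using x by (simp add: conj_def)
next
  case (insert a F)
  interpret PG: comm_group PG by (rule comm_PG)
  have fa: "f a \<in> P" and fF: "f \<in> F \<rightarrow> P" using insert.prems by auto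
  have cF: "(\<lambda>y. conj x (f y)) \<in> F \<rightarrow> P" using fF conj_P[OF x] by auto
  have pf: "finprod PG f F \<in> P" using PG.finprod_closed[of f F] fF by simp
  have "finprod PG (\<lambda>y. conj x (f y)) (insert a F) = conj x (f a) \<otimes> finprod PG (\<lambda>y. conj x (f y)) F"
    using PG.finprod_insert[of F a "\<lambda>y. conj x (f y)"] insert.hyps cF conj_P[OF x fa] by simp
  also have "\<dots> = conj x (f a) \<otimes> conj x (finprod PG f F)" using insert.IH fF by simp
  also have "\<dots> = conj x (f a \<otimes> finprod PG f F)" using conj_mult[OF x] fa pf P_car by simp
  also have "f a \<otimes> finprod PG f F = finprod PG f (insert a F)"
    using PG.finprod_insert[of F a f] insert.hyps fF fa by simp
  finally show ?case .
qed

lemma pow_mod_p: assumes u: "u \<in> P" shows "u [^] (n::nat) = u [^] (n mod p)"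
proof -
  have uc: "u \<in> carrier G" using u P_car by auto
  have "u [^] n = u [^] (p * (n div p) + n mod p)" by simp
  also have "\<dots> = u [^] (p * (n div p)) \<otimes> u [^] (n mod p)"
    using uc by (rule nat_pow_mult[symmetric])
  finally have e: "u [^] n = u [^] (p * (n div p)) \<otimes> u [^] (n mod p)" .
  have "u [^] (p * (n div p)) = (u [^] p) [^] (n div p)" using uc by (rule nat_pow_pow[symmetric])
  hence "u [^] (p * (n div p)) = \<one>" using pow_p[OF u] by simp
  thus ?thesis using e uc by simp
qed

lemma alpha_conj_M: assumes g: "g \<in> P"
  shows "\<exists>c\<in>P. \<forall>x\<in>M. Aut_of (nu G N g) x = c \<otimes> x \<otimes> inv c"
proof -
  interpret PG: comm_group PG by (rule comm_PG)
  define a where "a = Aut_of (nu G N g)"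
  have n: "nu G N g \<in> N" using nu_in g P_car by auto
  define \<delta> where "\<delta> = (\<lambda>x. inv x \<otimes> a x)"
  have ac: "a x \<in> carrier G" if "x \<in> carrier G" for x unfolding a_def using alpha_car g that by blast
  have dM: "\<delta> x \<in> P" if "x \<in> M" for x
  proof -
    have xc: "x \<in> carrier G" using that M_car by auto
    have "inv x \<otimes> (a x \<otimes> inv x) \<otimes> x \<in> P" using P_normal[OF xc delta_M[OF g that]] unfolding a_def .
    thus ?thesis unfolding \<delta>_def using xc ac[OF xc] by (simp add: m_assoc)
  qed
  have dcross: "\<delta> (y \<otimes> x) = conj x (\<delta> y) \<otimes> \<delta> x" if "x \<in> carrier G" "y \<in> carrier G" for x y
    unfolding \<delta>_def conj_def a_def using that A_mult[OF n that(2) that(1)] alpha_car[OF g] 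
    by (simp add: m_assoc inv_mult_group cancel1 cancel2)
  have dfun: "\<delta> \<in> M \<rightarrow> P" using dM by auto
  have finM: "finite M" using fin Msub by (meson rev_finite_subset subgroup.subset)
  define d where "d = finprod PG \<delta> M"
  have dP: "d \<in> P" unfolding d_def using PG.finprod_closed[of \<delta> M] dfun by simp
  have dc: "d \<in> carrier G" using dP P_car by auto
  have key: "d = conj x d \<otimes> \<delta> x [^] m" if x: "x \<in> M" for x
  proof -
    have xc: "x \<in> carrier G" using x M_car by auto
    have im: "(\<lambda>y. y \<otimes> x) ` M = M"
    proof
      show "(\<lambda>y. y \<otimes> x) ` M \<subseteq> M" using x subgroup.m_closed[OF Msub] by blast
      show "M \<subseteq> (\<lambda>y. y \<otimes> x) ` M"
      proof
        fix z assume z: "z \<in> M"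
        have "z \<otimes> inv x \<in> M" using z x Msub by (simp add: subgroup.m_closed subgroup.m_inv_closed)
        moreover have "z = z \<otimes> inv x \<otimes> x" using z x M_car by (simp add: m_assoc)
        ultimately show "z \<in> (\<lambda>y. y \<otimes> x) ` M" by blast
      qed
    qed
    have inj: "inj_on (\<lambda>y. y \<otimes> x) M" using xc M_car by (auto simp: inj_on_def)
    have "d = finprod PG \<delta> ((\<lambda>y. y \<otimes> x) ` M)" unfolding d_def im ..
    also have "\<dots> = finprod PG (\<lambda>y. \<delta> (y \<otimes> x)) M"
      using PG.finprod_reindex[of \<delta> "\<lambda>y. y \<otimes> x" M] im inj dfun by simp
    also have "\<dots> = finprod PG (\<lambda>y. conj x (\<delta> y) \<otimes>\<^bsub>PG\<^esub> \<delta> x) M"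
      using dcross xc M_car by (intro PG.finprod_cong') (auto simp: dM conj_P[OF xc] dM[OF x] intro!: subgroup.m_closed[OF Psub])
    also have "\<dots> = finprod PG (\<lambda>y. conj x (\<delta> y)) M \<otimes>\<^bsub>PG\<^esub> finprod PG (\<lambda>y. \<delta> x) M"
      using dM conj_P[OF xc] dM[OF x] by (intro PG.finprod_multf) auto
    also have "\<dots> = conj x d \<otimes> \<delta> x [^] m"
      using conj_finprod[OF xc finM dfun] PG.finprod_const[of "\<delta> x" M] dM[OF x] cardM
      unfolding d_def by (simp add: nat_pow_consistent[symmetric])
    finally show ?thesis .
  qed
  have "coprime m p" using prime_imp_coprime[OF pr ndvd] by (simp add: coprime_commute)
  then obtain k :: nat where k: "[m * k = 1] (mod p)" using cong_solve_coprime_nat by auto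
  define c where "c = inv d [^] k"
  have idP: "inv d \<in> P" using dP Psub by (simp add: subgroup.m_inv_closed)
  have cP: "c \<in> P" unfolding c_def using PG.nat_pow_closed[of "inv d" k] idP
    by (simp add: nat_pow_consistent[symmetric])
  have cc: "c \<in> carrier G" using cP P_car by auto
  have xM: "a x = c \<otimes> x \<otimes> inv c" if x: "x \<in> M" for x
  proof -
    have xc: "x \<in> carrier G" using x M_car by auto
    have cd: "conj x d \<in> P" using conj_P[OF xc dP] .
    have cdc: "conj x d \<in> carrier G" using cd P_car by auto
    have dx: "\<delta> x \<in> P" using dM[OF x] .
    have dxc: "\<delta> x \<in> carrier G" using dx P_car by auto
    have e1: "\<delta> x [^] m = inv (conj x d) \<otimes> d" using key[OF x] cdc dc dxc
      by (metis cancel2 nat_pow_closed)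
    have "\<delta> x = \<delta> x [^] (1::nat)" using dxc by simp
    also have "\<dots> = \<delta> x [^] (m * k)" using pow_mod_p[OF dx, of "m * k"] pow_mod_p[OF dx, of 1] k
      by (simp add: cong_def)
    also have "\<dots> = (inv (conj x d) \<otimes> d) [^] k" using nat_pow_pow[OF dxc, of m k] e1 by simp
    also have "\<dots> = inv (conj x d) [^] k \<otimes> d [^] k"
      using P_comm[of "inv (conj x d)" d] cd dP Psub cdc dc
      by (intro pow_mult_distrib) (auto simp: subgroup.m_inv_closed)
    also have "inv (conj x d) [^] k = conj x c"
      unfolding c_def using hom_pow[OF conj_hom[OF xc], of "inv d" k] dc xc
      by (simp add: conj_def inv_mult_group m_assoc)
    also have "d [^] k = inv c" unfolding c_def using dc by (simp add: nat_pow_inv)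
    finally have "\<delta> x = conj x c \<otimes> inv c" .
    hence "a x = x \<otimes> (conj x c \<otimes> inv c)" unfolding \<delta>_def using xc ac[OF xc] by (metis cancel1)
    thus ?thesis using xc cc by (simp add: conj_def m_assoc cancel1)
  qed
  show ?thesis using xM cP unfolding a_def by blast
qed

end

context HT begin

lemma alpha_conj: assumes g: "g \<in> P"
  shows "\<exists>c\<in>P. \<forall>x\<in>carrier G. Aut_of (nu G N g) x = c \<otimes> x \<otimes> inv c"
proof -
  obtain c where cP: "c \<in> P" and cM: "\<forall>x\<in>M. Aut_of (nu G N g) x = c \<otimes> x \<otimes> inv c"
    using alpha_conj_M[OF g] by blast
  have n: "nu G N g \<in> N" using nu_in g P_car by auto
  have cc: "c \<in> carrier G" using cP P_car by auto
  have "Aut_of (nu G N g) x = c \<otimes> x \<otimes> inv c" if x: "x \<in> carrier G" for x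
  proof -
    obtain u y where u: "u \<in> P" and y: "y \<in> M" and e: "x = u \<otimes> y" using decomp[OF x] by blast
    have uc: "u \<in> carrier G" and yc: "y \<in> carrier G" using u y P_car M_car by auto
    have "Aut_of (nu G N g) x = Aut_of (nu G N g) u \<otimes> Aut_of (nu G N g) y"
      using e A_mult[OF n uc yc] by simp
    also have "\<dots> = u \<otimes> (c \<otimes> y \<otimes> inv c)" using alpha_fix_P[OF g u] cM y by simp
    also have "\<dots> = (u \<otimes> c) \<otimes> y \<otimes> inv c" using uc yc cc by (simp add: m_assoc)
    also have "\<dots> = (c \<otimes> u) \<otimes> y \<otimes> inv c" using P_comm[OF u cP] by simp
    also have "\<dots> = c \<otimes> x \<otimes> inv c" using e uc yc cc by (simp add: m_assoc)
    finally show ?thesis .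
  qed
  thus ?thesis using cP by blast
qed

lemma nu_form: assumes g: "g \<in> P"
  shows "\<exists>c\<in>P. \<forall>x\<in>carrier G. nu G N g x = c \<otimes> x \<otimes> (inv c \<otimes> g)"
proof -
  obtain c where cP: "c \<in> P" and h: "\<forall>x\<in>carrier G. Aut_of (nu G N g) x = c \<otimes> x \<otimes> inv c"
    using alpha_conj[OF g] by blast
  have n: "nu G N g \<in> N" and gc: "g \<in> carrier G" using nu_in g P_car by auto
  have cc: "c \<in> carrier G" using cP P_car by auto
  have "nu G N g x = c \<otimes> x \<otimes> (inv c \<otimes> g)" if x: "x \<in> carrier G" for x
    using s_eq[OF n x] nu_one_app[OF gc] h x cc gc by (simp add: m_assoc)
  thus ?thesis using cP by blast
qed

lemma P_pow: "u \<in> P \<Longrightarrow> u [^] (k::nat) \<in> P"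
  by (induction k) (simp_all add: subgroup.one_closed[OF Psub] subgroup.m_closed[OF Psub])

lemma comm_pow: assumes w: "w \<in> carrier G" and x: "x \<in> carrier G" and c: "w \<otimes> x = x \<otimes> w"
  shows "w [^] (k::nat) \<otimes> x = x \<otimes> w [^] k"
proof (induction k)
  case 0 thus ?case using x by simp
next
  case (Suc k)
  have "w [^] Suc k \<otimes> x = w [^] k \<otimes> (w \<otimes> x)" using w x by (simp add: m_assoc)
  also have "\<dots> = (w [^] k \<otimes> x) \<otimes> w" using c w x by (simp add: m_assoc)
  also have "\<dots> = x \<otimes> w [^] Suc k" using Suc w x by (simp add: m_assoc)
  finally show ?case .
qed

lemma comm_all: assumes w: "w \<in> P" "w \<noteq> \<one>" and x: "x \<in> carrier G" and c: "w \<otimes> x = x \<otimes> w"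
  and u: "u \<in> P" shows "u \<otimes> x = x \<otimes> u"
proof -
  obtain k :: nat where "u = w [^] k" using cyclic[OF w u] by blast
  thus ?thesis using comm_pow[OF P_car[OF w(1)] x c] by simp
qed

definition endo :: "('a \<Rightarrow> 'a) \<Rightarrow> bool" where
  "endo f \<longleftrightarrow> (\<forall>u\<in>P. f u \<in> P) \<and> (\<forall>u\<in>P. \<forall>v\<in>P. f (u \<otimes> v) = f u \<otimes> f v)"

lemma endo_one: assumes f: "endo f" shows "f \<one> = \<one>"
proof -
  have o: "\<one> \<in> P" by (rule subgroup.one_closed[OF Psub])
  have fo: "f \<one> \<in> carrier G" using f o P_car unfolding endo_def by blast
  have "f \<one> = f \<one> \<otimes> f \<one>" using f o unfolding endo_def by (metis l_one one_closed)
  thus ?thesis using fo by (metis l_cancel_one)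
qed

lemma endo_pow: assumes f: "endo f" and u: "u \<in> P" shows "f (u [^] (k::nat)) = f u [^] k"
proof (induction k)
  case 0 thus ?case using endo_one[OF f] by simp
next
  case (Suc k)
  have "f (u [^] Suc k) = f (u [^] k \<otimes> u)" by simp
  also have "\<dots> = f (u [^] k) \<otimes> f u" using f P_pow[OF u] u unfolding endo_def by blast
  finally show ?case using Suc by simp
qed

lemma endo_comm: assumes f1: "endo f1" and f2: "endo f2" and u: "u \<in> P"
  shows "f1 (f2 u) = f2 (f1 u)"
proof -
  obtain w where w: "w \<in> P" "w \<noteq> \<one>" using exists_nontriv by blast
  have wc: "w \<in> carrier G" using w P_car by auto
  have f1w: "f1 w \<in> P" and f2w: "f2 w \<in> P" using f1 f2 w unfolding endo_def by auto
  obtain i :: nat where i: "f1 w = w [^] i" using cyclic[OF w f1w] by blast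
  obtain j :: nat where j: "f2 w = w [^] j" using cyclic[OF w f2w] by blast
  obtain k :: nat where k: "u = w [^] k" using cyclic[OF w u] by blast
  have "f1 (f2 u) = f1 (w [^] (j * k))" using k endo_pow[OF f2 w(1)] j wc by (simp add: nat_pow_pow)
  also have "\<dots> = w [^] (i * (j * k))" using endo_pow[OF f1 w(1)] i wc by (simp add: nat_pow_pow)
  also have "\<dots> = w [^] (j * (i * k))" by (simp add: ac_simps)
  also have "\<dots> = f2 (w [^] (i * k))" using endo_pow[OF f2 w(1)] j wc by (simp add: nat_pow_pow)
  also have "\<dots> = f2 (f1 u)" using k endo_pow[OF f1 w(1)] i wc by (simp add: nat_pow_pow)
  finally show ?thesis .
qed

lemma endo_A: "s \<in> N \<Longrightarrow> endo (Aut_of s)"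
  unfolding endo_def using A_P_mem A_mult P_car by blast

end

context HT begin

definition Rep :: "'a \<Rightarrow> 'a \<Rightarrow> 'a \<Rightarrow> bool" where
  "Rep g c e \<longleftrightarrow> c \<in> P \<and> e \<in> P \<and> (\<forall>x\<in>carrier G. nu G N g x = c \<otimes> x \<otimes> e)"

lemma rep_ex: assumes g: "g \<in> P" shows "\<exists>c e. Rep g c e"
proof -
  obtain c where cP: "c \<in> P" and h: "\<forall>x\<in>carrier G. nu G N g x = c \<otimes> x \<otimes> (inv c \<otimes> g)"
    using nu_form[OF g] by blast
  have "inv c \<otimes> g \<in> P" using cP g Psub by (simp add: subgroup.m_closed subgroup.m_inv_closed)
  thus ?thesis using cP h unfolding Rep_def by blast
qed

definition Cf :: "'a \<Rightarrow> 'a" where "Cf g = (SOME c. \<exists>e. Rep g c e)"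
definition Ef :: "'a \<Rightarrow> 'a" where "Ef g = (SOME e. Rep g (Cf g) e)"

lemma rep_CE: assumes g: "g \<in> P" shows "Rep g (Cf g) (Ef g)"
proof -
  have "\<exists>e. Rep g (Cf g) e" unfolding Cf_def using someI_ex[OF rep_ex[OF g]] .
  thus ?thesis unfolding Ef_def by (rule someI_ex)
qed

lemma CfP: "g \<in> P \<Longrightarrow> Cf g \<in> P" using rep_CE unfolding Rep_def by blast
lemma EfP: "g \<in> P \<Longrightarrow> Ef g \<in> P" using rep_CE unfolding Rep_def by blast
lemma CE_app: "g \<in> P \<Longrightarrow> x \<in> carrier G \<Longrightarrow> nu G N g x = Cf g \<otimes> x \<otimes> Ef g"
  using rep_CE unfolding Rep_def by blast
lemma CE_prod: assumes g: "g \<in> P" shows "Cf g \<otimes> Ef g = g"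
proof -
  have gc: "g \<in> carrier G" using g P_car by auto
  have "nu G N g \<one> = Cf g \<otimes> \<one> \<otimes> Ef g" using CE_app[OF g] by simp
  thus ?thesis using nu_one_app[OF gc] CfP[OF g] P_car by simp
qed

context
  assumes nc: "\<not> (\<forall>u\<in>P. \<forall>x\<in>carrier G. u \<otimes> x = x \<otimes> u)"
begin

lemma uniq_base: assumes c: "c \<in> P" and e: "e \<in> P" and c': "c' \<in> P" and e': "e' \<in> P"
  and eq: "\<forall>x\<in>carrier G. c \<otimes> x \<otimes> e = c' \<otimes> x \<otimes> e'"
  shows "c = c' \<and> e = e'"
proof -
  have cc: "c \<in> carrier G" "e \<in> carrier G" "c' \<in> carrier G" "e' \<in> carrier G"
    using c e c' e' P_car by auto
  have e1: "c \<otimes> e = c' \<otimes> e'" using bspec[OF eq one_closed] cc by simp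
  define w where "w = inv c' \<otimes> c"
  have wP: "w \<in> P" unfolding w_def using c c' Psub by (simp add: subgroup.m_closed subgroup.m_inv_closed)
  have wc: "w \<in> carrier G" using wP P_car by auto
  have we: "w \<otimes> e = e'" unfolding w_def using e1 cc by (simp add: m_assoc cancel2)
  have comm: "w \<otimes> x = x \<otimes> w" if x: "x \<in> carrier G" for x
  proof -
    have "w \<otimes> x \<otimes> e = x \<otimes> e'" unfolding w_def using eq x cc by (simp add: m_assoc cancel2)
    also have "\<dots> = x \<otimes> w \<otimes> e" using we x cc wc by (simp add: m_assoc)
    finally show ?thesis using r_cancel[of e "w \<otimes> x" "x \<otimes> w"] x cc wc by simp
  qed
  have "w = \<one>"
  proof (rule ccontr)
    assume "w \<noteq> \<one>"
    hence "\<forall>u\<in>P. \<forall>x\<in>carrier G. u \<otimes> x = x \<otimes> u" using comm_all[OF wP] comm by blast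
    thus False using nc by simp
  qed
  moreover have "c = c' \<otimes> (inv c' \<otimes> c)" using cc by (simp add: cancel1)
  ultimately have "c = c'" unfolding w_def using cc by simp
  moreover hence "e = e'" using e1 cc l_cancel[of c e e'] by simp
  ultimately show ?thesis by simp
qed

lemma rep_unique: assumes g: "g \<in> P" and r: "Rep g c e" shows "c = Cf g \<and> e = Ef g"
proof -
  have c: "c \<in> P" and e: "e \<in> P" and h: "\<forall>x\<in>carrier G. nu G N g x = c \<otimes> x \<otimes> e"
    using r unfolding Rep_def by auto
  have "\<forall>x\<in>carrier G. c \<otimes> x \<otimes> e = Cf g \<otimes> x \<otimes> Ef g" using h CE_app[OF g] by simp
  thus ?thesis using uniq_base[OF c e CfP[OF g] EfP[OF g]] by simp
qed

lemma N_rep: assumes s: "s \<in> N" and c: "c \<in> P" and e: "e \<in> P"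
  and h: "\<forall>x\<in>carrier G. s x = c \<otimes> x \<otimes> e"
  shows "c \<otimes> e \<in> P \<and> s = nu G N (c \<otimes> e) \<and> Cf (c \<otimes> e) = c \<and> Ef (c \<otimes> e) = e"
proof -
  have ceP: "c \<otimes> e \<in> P" using c e subgroup.m_closed[OF Psub] by blast
  have "s \<one> = c \<otimes> e" using h c P_car by simp
  hence sn: "nu G N (c \<otimes> e) = s" using nu_unique[OF s] by simp
  have "Rep (c \<otimes> e) c e" unfolding Rep_def using c e h sn by simp
  thus ?thesis using rep_unique[OF ceP] ceP sn by simp
qed

lemma CE_mult: assumes a: "a \<in> P" and b: "b \<in> P"
  shows "Cf (a \<otimes> b) = Cf a \<otimes> Cf b \<and> Ef (a \<otimes> b) = Ef a \<otimes> Ef b"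
proof -
  have ac: "a \<in> carrier G" and bc: "b \<in> carrier G" using a b P_car by auto
  have cP: "Cf a \<in> P" "Cf b \<in> P" "Ef a \<in> P" "Ef b \<in> P" using CfP EfP a b by auto
  hence cc: "Cf a \<in> carrier G" "Cf b \<in> carrier G" "Ef a \<in> carrier G" "Ef b \<in> carrier G"
    using P_car by auto
  have na: "nu G N a \<in> N" and nb: "nu G N b \<in> N" using nu_in ac bc by auto
  have s: "nu G N a \<otimes>\<^bsub>S\<^esub> nu G N b \<in> N" using subgroup.m_closed[OF Nsub na nb] .
  have c1: "Cf b \<otimes> Cf a \<in> P" and c2: "Ef a \<otimes> Ef b \<in> P" using cP subgroup.m_closed[OF Psub] by auto
  have h: "\<forall>x\<in>carrier G. (nu G N a \<otimes>\<^bsub>S\<^esub> nu G N b) x = (Cf b \<otimes> Cf a) \<otimes> x \<otimes> (Ef a \<otimes> Ef b)"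
  proof
    fix x assume x: "x \<in> carrier G"
    have "(nu G N a \<otimes>\<^bsub>S\<^esub> nu G N b) x = nu G N b (nu G N a x)" using x by (rule SymR_mult_app)
    also have "\<dots> = Cf b \<otimes> (Cf a \<otimes> x \<otimes> Ef a) \<otimes> Ef b"
      using CE_app[OF a x] CE_app[OF b] x cc by simp
    also have "\<dots> = (Cf b \<otimes> Cf a) \<otimes> x \<otimes> (Ef a \<otimes> Ef b)" using x cc by (simp add: m_assoc)
    finally show "(nu G N a \<otimes>\<^bsub>S\<^esub> nu G N b) x = (Cf b \<otimes> Cf a) \<otimes> x \<otimes> (Ef a \<otimes> Ef b)" .
  qed
  have r: "Cf ((Cf b \<otimes> Cf a) \<otimes> (Ef a \<otimes> Ef b)) = Cf b \<otimes> Cf a \<and> Ef ((Cf b \<otimes> Cf a) \<otimes> (Ef a \<otimes> Ef b)) = Ef a \<otimes> Ef b"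
    using N_rep[OF s c1 c2 h] by blast
  have "(Cf b \<otimes> Cf a) \<otimes> (Ef a \<otimes> Ef b) = Cf b \<otimes> ((Cf a \<otimes> Ef a) \<otimes> Ef b)" using cc by (simp add: m_assoc)
  also have "\<dots> = Cf b \<otimes> (a \<otimes> Ef b)" using CE_prod[OF a] by simp
  also have "\<dots> = Cf b \<otimes> (Ef b \<otimes> a)" using P_comm[OF a cP(4)] by simp
  also have "\<dots> = (Cf b \<otimes> Ef b) \<otimes> a" using cc ac by (simp add: m_assoc)
  also have "\<dots> = a \<otimes> b" using CE_prod[OF b] P_comm[OF b a] by simp
  finally have "(Cf b \<otimes> Cf a) \<otimes> (Ef a \<otimes> Ef b) = a \<otimes> b" .
  thus ?thesis using r P_comm[OF cP(2) cP(1)] by simp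
qed

lemma endo_Cf: "endo Cf" unfolding endo_def using CfP CE_mult by blast
lemma endo_Ef: "endo Ef" unfolding endo_def using EfP CE_mult by blast

end

end

context HT begin

lemma nu_rho: assumes g: "g \<in> P" and h: "\<forall>x\<in>carrier G. nu G N g x = x \<otimes> g"
  shows "nu G N g = rho G g"
proof -
  have gc: "g \<in> carrier G" using g P_car by auto
  show ?thesis by (rule SymR_ext[OF N_S[OF nu_in[OF gc]] rho_in[OF gc]]) (simp add: h rho_app)
qed

lemma nu_lam: assumes g: "g \<in> P" and h: "\<forall>x\<in>carrier G. nu G N g x = g \<otimes> x"
  shows "nu G N g = lam G g"
proof -
  have gc: "g \<in> carrier G" using g P_car by auto
  show ?thesis by (rule SymR_ext[OF N_S[OF nu_in[OF gc]] lam_in[OF gc]]) (simp add: h lam_app)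
qed

lemma part2: "nu G N ` P = rho G ` P \<or> nu G N ` P = lam G ` P"
proof (cases "\<forall>u\<in>P. \<forall>x\<in>carrier G. u \<otimes> x = x \<otimes> u")
  case True
  have "nu G N g = rho G g" if g: "g \<in> P" for g
  proof (rule nu_rho[OF g], rule ballI)
    fix x assume x: "x \<in> carrier G"
    obtain c where cP: "c \<in> P" and h: "\<forall>x\<in>carrier G. nu G N g x = c \<otimes> x \<otimes> (inv c \<otimes> g)"
      using nu_form[OF g] by blast
    have cc: "c \<in> carrier G" and gc: "g \<in> carrier G" using cP g P_car by auto
    have cx: "c \<otimes> x = x \<otimes> c" using True cP x by blast
    have "nu G N g x = (c \<otimes> x) \<otimes> (inv c \<otimes> g)" using h x by simp
    also have "\<dots> = (x \<otimes> c) \<otimes> (inv c \<otimes> g)" using cx by simp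
    also have "\<dots> = x \<otimes> g" using x cc gc by (simp add: m_assoc cancel1)
    finally show "nu G N g x = x \<otimes> g" .
  qed
  hence "nu G N ` P = rho G ` P" by (rule image_cong[OF refl])
  thus ?thesis by simp
next
  case nc: False
  show ?thesis
  proof (cases "\<exists>g\<in>P. g \<noteq> \<one> \<and> Cf g = \<one>")
    case True
    then obtain g where g: "g \<in> P" "g \<noteq> \<one>" and cg: "Cf g = \<one>" by blast
    have "nu G N u = rho G u" if u: "u \<in> P" for u
    proof -
      obtain k :: nat where k: "u = g [^] k" using cyclic[OF g u] by blast
      have "Cf u = \<one>" using k endo_pow[OF endo_Cf[OF nc] g(1)] cg by simp
      hence "Ef u = u" using CE_prod[OF u] EfP[OF u] P_car by simp
      hence "\<forall>x\<in>carrier G. nu G N u x = x \<otimes> u" using CE_app[OF u] \<open>Cf u = \<one>\<close> by simp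
      thus ?thesis by (rule nu_rho[OF u])
    qed
    hence "nu G N ` P = rho G ` P" by (rule image_cong[OF refl])
    thus ?thesis by simp
  next
    case notC: False
    show ?thesis
    proof (cases "\<exists>g\<in>P. g \<noteq> \<one> \<and> Ef g = \<one>")
      case True
      then obtain g where g: "g \<in> P" "g \<noteq> \<one>" and eg: "Ef g = \<one>" by blast
      have "nu G N u = lam G u" if u: "u \<in> P" for u
      proof -
        obtain k :: nat where k: "u = g [^] k" using cyclic[OF g u] by blast
        have "Ef u = \<one>" using k endo_pow[OF endo_Ef[OF nc] g(1)] eg by simp
        hence "Cf u = u" using CE_prod[OF u] CfP[OF u] P_car by simp
        hence "\<forall>x\<in>carrier G. nu G N u x = u \<otimes> x" using CE_app[OF u] \<open>Ef u = \<one>\<close> u P_car by simp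
        thus ?thesis by (rule nu_lam[OF u])
      qed
      hence "nu G N ` P = lam G ` P" by (rule image_cong[OF refl])
      thus ?thesis by simp
    next
      case notE: False
      obtain h u0 where hc: "h \<in> carrier G" and u0: "u0 \<in> P" and hu: "u0 \<otimes> h \<noteq> h \<otimes> u0"
        using nc by blast
      obtain w where w: "w \<in> P" "w \<noteq> \<one>" using exists_nontriv by blast
      have wc: "w \<in> carrier G" using w P_car by auto
      have Cinj: "a = b" if a: "a \<in> P" and b: "b \<in> P" and e: "Cf a = Cf b" for a b
      proof -
        have ib: "inv b \<in> P" using b Psub by (simp add: subgroup.m_inv_closed)
        have abP: "a \<otimes> inv b \<in> P" using a ib subgroup.m_closed[OF Psub] by blast
        have bb: "b \<otimes> inv b = \<one>" using b P_car by simp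
        have "Cf (a \<otimes> inv b) = Cf a \<otimes> Cf (inv b)" using CE_mult[OF nc a ib] by simp
        also have "\<dots> = Cf (b \<otimes> inv b)" using CE_mult[OF nc b ib] e by simp
        also have "\<dots> = \<one>" using bb endo_one[OF endo_Cf[OF nc]] by simp
        finally have "a \<otimes> inv b = \<one>" using notC abP by blast
        thus "a = b" using a b P_car by (metis inv_equality inv_inv inv_closed)
      qed
      define t where "t = nu G N h"
      have t: "t \<in> N" unfolding t_def using nu_in[OF hc] .
      have tS: "t \<in> carrier S" using N_S[OF t] .
      have t1: "t \<one> = h" unfolding t_def using nu_one_app[OF hc] .
      define \<beta> where "\<beta> = Aut_of t"
      have teq: "t z = \<beta> z \<otimes> h" if "z \<in> carrier G" for z unfolding \<beta>_def using s_eq[OF t that] t1 by simp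
      have bc: "\<beta> z \<in> carrier G" if "z \<in> carrier G" for z unfolding \<beta>_def using A_car[OF t that] .
      have nw: "nu G N w \<in> N" using nu_in[OF wc] .
      have CwP: "Cf w \<in> P" and EwP: "Ef w \<in> P" using CfP EfP w by auto
      have Cwc: "Cf w \<in> carrier G" and Ewc: "Ef w \<in> carrier G" using CwP EwP P_car by auto
      define s' where "s' = inv\<^bsub>S\<^esub> t \<otimes>\<^bsub>S\<^esub> nu G N w \<otimes>\<^bsub>S\<^esub> t"
      have s': "s' \<in> N" unfolding s'_def using t nw Nsub
        by (simp add: subgroup.m_closed subgroup.m_inv_closed)
      have bCP: "\<beta> (Cf w) \<in> P" unfolding \<beta>_def by (rule A_P_mem[OF t CwP])
      have bEP: "\<beta> (Ef w) \<in> P" unfolding \<beta>_def by (rule A_P_mem[OF t EwP])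
      have cbEP: "conj h (\<beta> (Ef w)) \<in> P" using conj_P[OF hc bEP] .
      have s'app: "\<forall>x\<in>carrier G. s' x = \<beta> (Cf w) \<otimes> x \<otimes> conj h (\<beta> (Ef w))"
      proof
        fix x assume x: "x \<in> carrier G"
        define y where "y = (inv\<^bsub>S\<^esub> t) x"
        have yc: "y \<in> carrier G" unfolding y_def using SymR_inv_in[OF tS x] .
        have ty: "t y = x" unfolding y_def using SymR_inv_app2[OF tS x] .
        have bey: "\<beta> y = x \<otimes> inv h" using teq[OF yc] ty bc[OF yc] hc by (simp add: m_assoc)
        have nwy: "nu G N w y \<in> carrier G" using N_app[OF nw yc] .
        have "s' x = t (nu G N w y)" unfolding s'_def y_def using x by (simp add: SymR_mult_app)
        also have "\<dots> = \<beta> (Cf w \<otimes> y \<otimes> Ef w) \<otimes> h" using teq[OF nwy] CE_app[OF w(1) yc] by simp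
        also have "\<dots> = \<beta> (Cf w) \<otimes> \<beta> y \<otimes> \<beta> (Ef w) \<otimes> h"
          unfolding \<beta>_def using A_mult[OF t] Cwc Ewc yc by simp
        also have "\<dots> = \<beta> (Cf w) \<otimes> x \<otimes> conj h (\<beta> (Ef w))"
          unfolding bey conj_def using bc Cwc Ewc hc x by (simp add: m_assoc)
        finally show "s' x = \<beta> (Cf w) \<otimes> x \<otimes> conj h (\<beta> (Ef w))" .
      qed
      define g' where "g' = \<beta> (Cf w) \<otimes> conj h (\<beta> (Ef w))"
      have r: "g' \<in> P \<and> s' = nu G N g' \<and> Cf g' = \<beta> (Cf w) \<and> Ef g' = conj h (\<beta> (Ef w))"
        unfolding g'_def using N_rep[OF nc s' bCP cbEP s'app] .
      have bwP: "\<beta> w \<in> P" unfolding \<beta>_def by (rule A_P_mem[OF t w(1)])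
      have eA: "endo \<beta>" unfolding \<beta>_def by (rule endo_A[OF t])
      have "Cf g' = Cf (\<beta> w)" using r endo_comm[OF endo_Cf[OF nc] eA w(1)] by simp
      hence gb: "g' = \<beta> w" using Cinj r bwP by blast
      have "conj h (\<beta> (Ef w)) = \<beta> (Ef w)" using r gb endo_comm[OF endo_Ef[OF nc] eA w(1)] by simp
      hence vh: "\<beta> (Ef w) \<otimes> h = h \<otimes> \<beta> (Ef w)" unfolding conj_def
        using bc[OF Ewc] hc by (metis cancel1 m_assoc inv_closed m_closed)
      have "Ef w \<noteq> \<one>" using notE w by blast
      hence "\<beta> (Ef w) \<noteq> \<one>" unfolding \<beta>_def using A_inj[OF t] A_one[OF t] Ewc
        by (metis inj_onD one_closed)
      hence "u0 \<otimes> h = h \<otimes> u0" using comm_all[OF bEP _ hc vh u0] by simp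
      thus ?thesis using hu by simp
    qed
  qed
qed

lemma part3: "comm_subgroup (SymR (carrier G)) (rho G ` carrier G) (nu G N ` P) \<subseteq> nu G N ` P"
  unfolding comm_subgroup_def
proof (rule S.generate_subgroup_incl[OF _ nuP_sub_S])
  show "{commR S a b |a b. a \<in> rho G ` carrier G \<and> b \<in> nu G N ` P} \<subseteq> nu G N ` P"
  proof
    fix z assume "z \<in> {commR S a b |a b. a \<in> rho G ` carrier G \<and> b \<in> nu G N ` P}"
    then obtain x b where x: "x \<in> carrier G" and b: "b \<in> nu G N ` P" and z: "z = commR S (rho G x) b"
      by blast
    from part2 show "z \<in> nu G N ` P"
    proof
      assume L: "nu G N ` P = rho G ` P"
      then obtain u where u: "u \<in> P" and bu: "b = rho G u" using b by auto
      have uc: "u \<in> carrier G" using u P_car by auto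
      have "z = rho G (inv x \<otimes> inv u \<otimes> x \<otimes> u)"
        unfolding z commR_def bu using x uc
        by (simp add: rho_inv rho_mult rho_in)
      moreover have "inv x \<otimes> inv u \<otimes> x \<otimes> u \<in> P"
      proof -
        have "inv x \<otimes> inv u \<otimes> x \<in> P" using P_normal[OF x, of "inv u"] u Psub
          by (simp add: subgroup.m_inv_closed)
        thus ?thesis using u subgroup.m_closed[OF Psub] by blast
      qed
      ultimately show ?thesis using L by blast
    next
      assume L: "nu G N ` P = lam G ` P"
      then obtain u where u: "u \<in> P" and bu: "b = lam G u" using b by auto
      have uc: "u \<in> carrier G" using u P_car by auto
      have a: "rho G x \<in> carrier S" and bb: "lam G u \<in> carrier S" using rho_in[OF x] lam_in[OF uc] .
      have cm: "rho G x \<otimes>\<^bsub>S\<^esub> lam G u = lam G u \<otimes>\<^bsub>S\<^esub> rho G x" using rho_lam_comm[OF x uc] .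
      have "z = inv\<^bsub>S\<^esub> rho G x \<otimes>\<^bsub>S\<^esub> inv\<^bsub>S\<^esub> lam G u \<otimes>\<^bsub>S\<^esub> (rho G x \<otimes>\<^bsub>S\<^esub> lam G u)"
        unfolding z commR_def bu using a bb by (simp add: S.m_assoc)
      also have "\<dots> = \<one>\<^bsub>S\<^esub>" unfolding cm using a bb by (simp add: S.m_assoc[symmetric]) (simp add: S.m_assoc)
      finally have "z = \<one>\<^bsub>S\<^esub>" .
      thus ?thesis using subgroup.one_closed[OF nuP_sub_S] by simp
    qed
  qed
qed

end

theorem mainTheorem18:
  fixes G :: "('a, 'b) monoid_scheme" and p m :: nat and P M :: "'a set"
    and N :: "('a \<Rightarrow> 'a) set"
  assumes "group G"
    and "Factorial_Ring.prime p"
    and "order G = m * p" and "finite (carrier G)"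
    and "\<not> p dvd m"
    and "sylow_subgroup p P G"
    and "\<And>Q. sylow_subgroup p Q G \<Longrightarrow> Q = P"
    and "subgroup M G" and "card M = m"
    and "\<not> p dvd card (auto (G\<lparr>carrier := M\<rparr>))"
    and "N \<subseteq> Hol G" and "regular_subgroup (carrier G) N"
  shows "subgroup (nu G N ` P) ((SymR (carrier G))\<lparr>carrier := N\<rparr>)
       \<and> sylow_subgroup p (nu G N ` P) ((SymR (carrier G))\<lparr>carrier := N\<rparr>)
       \<and> (nu G N ` P = rho G ` P \<or> nu G N ` P = lam G ` P)
       \<and> comm_subgroup (SymR (carrier G)) (rho G ` carrier G) (nu G N ` P) \<subseteq> nu G N ` P"
proof -
  interpret HT G p m P M N
    by (rule HT.intro[OF assms(1) HT_axioms.intro[OF assms(2-12)]])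
  show ?thesis using part1 part1b part2 part3 by blast
qed

end
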